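(* Let $G$ be a cop-win graph of corner rank $\alpha$. Every vertex of corner rank $k>1$ has at least one neighbor of corner rank $k-1$. In particular, if for some $k<\alpha$ there is exactly one vertex $v$ of corner rank $k$, then $v$ is adjacent to every vertex of corner rank $k+1$.
   Context: All graphs are finite, nonempty, and reflexive (every vertex has a loop). $N[v]$ is the closed neighborhood of $v$ (including $v$). For distinct $v,w$, $w$ strictly corners $v$ if $N[v]\subsetneq N[w]$; $v$ is then a strict corner. Corner ranking: set $G^{(1)}=G$, $k=1$. If $G^{(k)}$ is a clique, give all its vertices rank $k$ and stop. Else if $G^{(k)}$ has no strict corners, give all its vertices rank $\infty$ and stop. Else give every strict corner of $G^{(k)}$ rank $k$, delete them to get $G^{(k+1)}$ (induced subgraph), increase $k$ and repeat. The corner rank of $G$ is the largest rank of a vertex; cop-win graphs are exactly those of finite corner rank. Standing assumption: $\alpha\ge 2$. *)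

theory Defs
  imports Main
begin

text \<open>A finite reflexive graph is given by a finite nonempty vertex set V and a
symmetric adjacency relation E that has a loop at every vertex.  Only edges
between vertices of V matter.\<close>

definition refl_graph :: "'a set \<Rightarrow> ('a \<Rightarrow> 'a \<Rightarrow> bool) \<Rightarrow> bool" where
  "refl_graph V E \<longleftrightarrow> finite V \<and> V \<noteq> {} \<and> (\<forall>v\<in>V. E v v) \<and>
     (\<forall>v\<in>V. \<forall>w\<in>V. E v w \<longrightarrow> E w v)"

definition cnbhd :: "('a \<Rightarrow> 'a \<Rightarrow> bool) \<Rightarrow> 'a set \<Rightarrow> 'a \<Rightarrow> 'a set" where
  "cnbhd E S v = {w \<in> S. E v w}"

definition is_clique :: "('a \<Rightarrow> 'a \<Rightarrow> bool) \<Rightarrow> 'a set \<Rightarrow> bool" where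
  "is_clique E S \<longleftrightarrow> (\<forall>v\<in>S. \<forall>w\<in>S. E v w)"

definition strict_corners :: "('a \<Rightarrow> 'a \<Rightarrow> bool) \<Rightarrow> 'a set \<Rightarrow> 'a set" where
  "strict_corners E S = {v \<in> S. \<exists>w\<in>S. w \<noteq> v \<and> cnbhd E S v \<subset> cnbhd E S w}"

text \<open>stage V E k is the vertex set of G^(k+1) (empty once the process has stopped
at a clique; constant once it has stopped with no strict corners).\<close>
fun stage :: "'a set \<Rightarrow> ('a \<Rightarrow> 'a \<Rightarrow> bool) \<Rightarrow> nat \<Rightarrow> 'a set" where
  "stage V E 0 = V"
| "stage V E (Suc k) =
     (let S = stage V E k in if is_clique E S then {} else S - strict_corners E S)"

definition gets_rank :: "'a set \<Rightarrow> ('a \<Rightarrow> 'a \<Rightarrow> bool) \<Rightarrow> 'a \<Rightarrow> nat \<Rightarrow> bool" where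
  "gets_rank V E v k \<longleftrightarrow> k \<ge> 1 \<and> v \<in> stage V E (k - 1) \<and>
     (is_clique E (stage V E (k - 1)) \<or> v \<in> strict_corners E (stage V E (k - 1)))"

text \<open>Corner rank of a vertex: Some k if finite, None for rank \<infinity>.\<close>
definition corner_rank :: "'a set \<Rightarrow> ('a \<Rightarrow> 'a \<Rightarrow> bool) \<Rightarrow> 'a \<Rightarrow> nat option" where
  "corner_rank V E v =
     (if \<exists>k. gets_rank V E v k then Some (LEAST k. gets_rank V E v k) else None)"

definition cop_win :: "'a set \<Rightarrow> ('a \<Rightarrow> 'a \<Rightarrow> bool) \<Rightarrow> bool" where
  "cop_win V E \<longleftrightarrow> (\<forall>v\<in>V. corner_rank V E v \<noteq> None)"

definition graph_corner_rank :: "'a set \<Rightarrow> ('a \<Rightarrow> 'a \<Rightarrow> bool) \<Rightarrow> nat" where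
  "graph_corner_rank V E = Max ((\<lambda>v. the (corner_rank V E v)) ` V)"

end

theory Submission
  imports Defs
begin

lemma stage_sub: "stage V E k \<subseteq> V"
  by (induction k) (auto simp: Let_def)

lemma stage_Suc_sub: "stage V E (Suc k) \<subseteq> stage V E k"
  by (auto simp: Let_def)

lemma stage_Suc_ne:
  assumes "stage V E (Suc k) \<noteq> {}"
  shows "\<not> is_clique E (stage V E k) \<and> stage V E (Suc k) = stage V E k - strict_corners E (stage V E k)"
  using assms by (simp add: Let_def split: if_splits)

lemma stage_mono: "j \<le> k \<Longrightarrow> stage V E k \<subseteq> stage V E j"
proof (induction k)
  case 0 then show ?case by simp
next
  case (Suc k)
  then show ?case using stage_Suc_sub[of V E k] by (cases "j = Suc k") auto
qed

lemma gets_rank_out: "gets_rank V E v k \<Longrightarrow> v \<notin> stage V E k"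
  unfolding gets_rank_def
  by (cases k) (auto simp: Let_def)

lemma gets_rank_unique:
  assumes "gets_rank V E v j" "gets_rank V E v k" shows "j = k"
proof (rule ccontr)
  assume "j \<noteq> k"
  then consider "j < k" | "k < j" by linarith
  then show False
  proof cases
    case 1
    then have "stage V E (k - 1) \<subseteq> stage V E j" by (intro stage_mono) auto
    then show False using assms gets_rank_out[OF assms(1)] unfolding gets_rank_def by auto
  next
    case 2
    then have "stage V E (j - 1) \<subseteq> stage V E k" by (intro stage_mono) auto
    then show False using assms gets_rank_out[OF assms(2)] unfolding gets_rank_def by auto
  qed
qed

lemma corner_rank_iff: "corner_rank V E v = Some k \<longleftrightarrow> gets_rank V E v k"
proof
  assume h: "corner_rank V E v = Some k"
  then have ex: "\<exists>k. gets_rank V E v k" unfolding corner_rank_def by (auto split: if_splits)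
  then have "k = (LEAST k. gets_rank V E v k)" using h unfolding corner_rank_def by auto
  then show "gets_rank V E v k" using LeastI_ex[OF ex] by simp
next
  assume h: "gets_rank V E v k"
  then have "(LEAST k. gets_rank V E v k) = k"
    by (intro Least_equality) (auto dest: gets_rank_unique)
  then show "corner_rank V E v = Some k" using h unfolding corner_rank_def by auto
qed

lemma key:
  assumes rg: "refl_graph V E" and gr: "gets_rank V E v k" and k: "k > 1"
  shows "\<exists>w. E v w \<and> gets_rank V E w (k - 1)"
proof -
  define m where "m = k - 2"
  have km: "k = Suc (Suc m)" using k unfolding m_def by simp
  define S where "S = stage V E m"
  define C where "C = stage V E (Suc m)"
  have vC: "v \<in> C" using gr unfolding gets_rank_def C_def km by simp
  have "stage V E (Suc m) \<noteq> {}" using vC unfolding C_def by blast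
  from stage_Suc_ne[OF this] have ncl: "\<not> is_clique E S" and Cdef: "C = S - strict_corners E S"
    unfolding C_def S_def by blast+
  have SV: "S \<subseteq> V" unfolding S_def by (rule stage_sub)
  have finV: "finite V" and reflV: "\<forall>x\<in>V. E x x" using rg unfolding refl_graph_def by blast+
  have finS: "finite S" using finV SV by (rule finite_subset[rotated])
  have reflS: "\<forall>x\<in>S. E x x" using reflV SV by blast
  show ?thesis
  proof (rule ccontr)
    assume nex: "\<not> ?thesis"
    have nb: "\<forall>x\<in>S. E v x \<longrightarrow> x \<notin> strict_corners E S"
    proof (intro ballI impI)
      fix x assume "x \<in> S" "E v x"
      show "x \<notin> strict_corners E S"
      proof
        assume "x \<in> strict_corners E S"
        then have "gets_rank V E x (k - 1)" using km \<open>x \<in> S\<close> unfolding gets_rank_def S_def by auto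
        then show False using nex \<open>E v x\<close> by auto
      qed
    qed
    have NvC: "cnbhd E S v = cnbhd E C v"
      using nb Cdef unfolding cnbhd_def by auto
    have vnc: "v \<notin> strict_corners E S" using vC Cdef by auto
    have CS: "C \<subseteq> S" using Cdef by auto
    have "is_clique E C \<or> v \<in> strict_corners E C"
      using gr km unfolding gets_rank_def C_def by auto
    then show False
    proof
      assume cl: "is_clique E C"
      have NvS: "cnbhd E S v = C" using NvC cl vC CS unfolding cnbhd_def is_clique_def by auto
      have allC: "\<forall>x\<in>C. cnbhd E S x = C"
      proof
        fix x assume xC: "x \<in> C"
        have sup: "C \<subseteq> cnbhd E S x" using cl xC CS unfolding cnbhd_def is_clique_def by auto
        show "cnbhd E S x = C"
        proof (rule ccontr)
          assume "cnbhd E S x \<noteq> C"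
          then have "cnbhd E S v \<subset> cnbhd E S x" using sup NvS by auto
          moreover have "x \<noteq> v" using \<open>cnbhd E S x \<noteq> C\<close> NvS by auto
          ultimately have "v \<in> strict_corners E S" using xC CS vC unfolding strict_corners_def by auto
          then show False using vnc by simp
        qed
      qed
      have ne: "S - C \<noteq> {}"
      proof
        assume "S - C = {}"
        then have "S = C" using CS by auto
        then show False using ncl cl by simp
      qed
      have finD: "finite (S - C)" using finS by auto
      define f where "f = (\<lambda>y. card (cnbhd E S y))"
      have "Max (f ` (S - C)) \<in> f ` (S - C)" using finD ne by (intro Max_in) auto
      then obtain u where uD: "u \<in> S - C" and uM: "f u = Max (f ` (S - C))" by auto
      have umax: "\<forall>y\<in>S - C. card (cnbhd E S y) \<le> card (cnbhd E S u)"
      proof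
        fix y assume "y \<in> S - C"
        then have "f y \<le> Max (f ` (S - C))" using finD by (intro Max_ge) auto
        then show "card (cnbhd E S y) \<le> card (cnbhd E S u)" using uM unfolding f_def by simp
      qed
      have "u \<in> strict_corners E S" using uD Cdef by auto
      then obtain w where w: "w \<in> S" "w \<noteq> u" "cnbhd E S u \<subset> cnbhd E S w"
        unfolding strict_corners_def by auto
      have "u \<in> cnbhd E S u" using reflS uD unfolding cnbhd_def by auto
      then have "u \<in> cnbhd E S w" using w by auto
      then have "w \<notin> C" using allC uD by auto
      then have "card (cnbhd E S w) \<le> card (cnbhd E S u)" using umax w by auto
      moreover have "card (cnbhd E S u) < card (cnbhd E S w)"
        using w finS by (intro psubset_card_mono) (auto simp: cnbhd_def)
      ultimately show False by simp
    next
      assume "v \<in> strict_corners E C"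
      then obtain w where w: "w \<in> C" "w \<noteq> v" "cnbhd E C v \<subset> cnbhd E C w"
        unfolding strict_corners_def by auto
      have "cnbhd E C w \<subseteq> cnbhd E S w" using CS unfolding cnbhd_def by auto
      then have "cnbhd E S v \<subset> cnbhd E S w" using w NvC by auto
      then have "v \<in> strict_corners E S" using w CS vC unfolding strict_corners_def by auto
      then show False using vnc by simp
    qed
  qed
qed

theorem corollary3p17:
  fixes V :: "'a set" and E :: "'a \<Rightarrow> 'a \<Rightarrow> bool" and \<alpha> :: nat
  assumes "refl_graph V E"
    and "cop_win V E"
    and "graph_corner_rank V E = \<alpha>"
    and "\<alpha> \<ge> 2"
  shows "(\<forall>v\<in>V. \<forall>k. k > 1 \<and> corner_rank V E v = Some k \<longrightarrow>
            (\<exists>w\<in>V. E v w \<and> corner_rank V E w = Some (k - 1)))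
       \<and> (\<forall>k v. k < \<alpha> \<and> {u \<in> V. corner_rank V E u = Some k} = {v} \<longrightarrow>
            (\<forall>u\<in>V. corner_rank V E u = Some (k + 1) \<longrightarrow> E v u))"
proof -
  have P1: "\<forall>v\<in>V. \<forall>k. k > 1 \<and> corner_rank V E v = Some k \<longrightarrow>
            (\<exists>w\<in>V. E v w \<and> corner_rank V E w = Some (k - 1))"
  proof (intro ballI allI impI)
    fix v k assume "v \<in> V" "1 < k \<and> corner_rank V E v = Some k"
    then have "gets_rank V E v k" "1 < k" by (auto simp: corner_rank_iff)
    then obtain w where w: "E v w" "gets_rank V E w (k - 1)"
      using key[OF assms(1)] by blast
    then have "w \<in> V" using stage_sub[of V E "k - 1 - 1"] unfolding gets_rank_def by blast
    then show "\<exists>w\<in>V. E v w \<and> corner_rank V E w = Some (k - 1)"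
      using w by (auto simp add: corner_rank_iff)
  qed
  moreover have "\<forall>k v. k < \<alpha> \<and> {u \<in> V. corner_rank V E u = Some k} = {v} \<longrightarrow>
            (\<forall>u\<in>V. corner_rank V E u = Some (k + 1) \<longrightarrow> E v u)"
  proof (intro allI impI ballI)
    fix k v u
    assume h: "k < \<alpha> \<and> {u \<in> V. corner_rank V E u = Some k} = {v}" and uV: "u \<in> V"
      and ur: "corner_rank V E u = Some (k + 1)"
    have hS: "{u \<in> V. corner_rank V E u = Some k} = {v}" using h by (rule conjunct2)
    have "v \<in> {u \<in> V. corner_rank V E u = Some k}" unfolding hS by (rule singletonI)
    then have vV: "v \<in> V" "corner_rank V E v = Some k" by auto
    then have "k \<ge> 1" by (simp add: corner_rank_iff gets_rank_def)
    have "1 < k + 1" using \<open>k \<ge> 1\<close> by simp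
    then obtain w where w: "w \<in> V" "E u w" "corner_rank V E w = Some (k + 1 - 1)"
      using P1[rule_format, OF uV, of "k + 1"] ur by blast
    then have w3: "corner_rank V E w = Some k" by simp
    then have "w \<in> {u \<in> V. corner_rank V E u = Some k}" using w by simp
    then have "w = v" unfolding hS by (rule singletonD)
    have sym: "\<forall>v\<in>V. \<forall>w\<in>V. E v w \<longrightarrow> E w v" using assms(1) unfolding refl_graph_def by blast
    then show "E v u" using sym w uV \<open>w = v\<close> by blast
  qed
  ultimately show ?thesis by blast
qed

end
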